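(* Let $\mathcal P$ be a compact set of $n\times n$ doubly stochastic matrices and let $P(1),P(2),P(3),\ldots$ be a sequence of matrices from $\mathcal P$. Suppose $j_1<j_2<\cdots$ is an infinite increasing sequence of indices such that each $P(j_r)$ is a Sarymsakov matrix and the set $\bigcup_{r\ge1}\{P(j_r)\}$ is compact. If there exists an integer $T$ such that $j_{r+1}-j_r\le T$ for all $r\ge1$, then $P(k)\cdots P(1)$ converges as $k\to\infty$ to a rank-one matrix $\mathbf 1c^T$ with $c_i\ge0$ and $\sum_i c_i=1$.
   Context: $\mathcal N=\{1,\ldots,n\}$. A matrix is stochastic if it is entrywise nonnegative with row sums $1$, and doubly stochastic if in addition its column sums are $1$. For stochastic $P$ and $\mathcal A\subseteq\mathcal N$, $F_P(\mathcal A)=\{j:\ p_{ij}>0\text{ for some } i\in\mathcal A\}$. A Sarymsakov matrix is a stochastic $P$ such that for any disjoint nonempty $\mathcal A,\tilde{\mathcal A}\subseteq\mathcal N$, either $F_P(\mathcal A)\cap F_P(\tilde{\mathcal A})\neq\emptyset$, or $F_P(\mathcal A)\cap F_P(\tilde{\mathcal A})=\emptyset$ and $|F_P(\mathcal A)\cup F_P(\tilde{\mathcal A})|>|\mathcal A\cup\tilde{\mathcal A}|$. $\mathbf 1$ is the all-ones column vector. *)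

theory Defs
  imports "HOL-Analysis.Analysis"
begin

text \<open>n x n matrices are modelled as real^'n^'n, with index set N = UNIV :: 'n set.\<close>

definition stochastic :: "real^'n^'n \<Rightarrow> bool" where
  "stochastic P \<longleftrightarrow> (\<forall>i j. P $ i $ j \<ge> 0) \<and> (\<forall>i. (\<Sum>j\<in>UNIV. P $ i $ j) = 1)"

definition doubly_stochastic :: "real^'n^'n \<Rightarrow> bool" where
  "doubly_stochastic P \<longleftrightarrow> stochastic P \<and> (\<forall>j. (\<Sum>i\<in>UNIV. P $ i $ j) = 1)"

definition F_of :: "real^'n^'n \<Rightarrow> 'n set \<Rightarrow> 'n set" where
  "F_of P A = {j. \<exists>i\<in>A. P $ i $ j > 0}"

definition sarymsakov :: "real^'n^'n \<Rightarrow> bool" where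
  "sarymsakov P \<longleftrightarrow> stochastic P \<and>
     (\<forall>A B. A \<noteq> {} \<and> B \<noteq> {} \<and> A \<inter> B = {} \<longrightarrow>
        (F_of P A \<inter> F_of P B \<noteq> {} \<or>
         (F_of P A \<inter> F_of P B = {} \<and> card (F_of P A \<union> F_of P B) > card (A \<union> B))))"

fun left_prod :: "(nat \<Rightarrow> real^'n^'n) \<Rightarrow> nat \<Rightarrow> real^'n^'n" where
  "left_prod P 0 = mat 1"
| "left_prod P (Suc k) = P (Suc k) ** left_prod P k"

end

theory Submission imports Defs begin

definition fq :: "real^'n^'n \<Rightarrow> real^'n \<Rightarrow> real" where
  "fq Q y = (\<Sum>i\<in>UNIV. (\<Sum>j\<in>UNIV. Q$i$j * y$j)^2)"

lemma row_identity:
  fixes q y :: "'a \<Rightarrow> real"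
  assumes "finite J" "sum q J = 1"
  shows "(\<Sum>j\<in>J. q j * y j)^2 + (\<Sum>j\<in>J. q j * (y j - (\<Sum>k\<in>J. q k * y k))^2) = (\<Sum>j\<in>J. q j * (y j)^2)"
proof -
  define m where "m = (\<Sum>k\<in>J. q k * y k)"
  have "(\<Sum>j\<in>J. q j * (y j - m)^2) = (\<Sum>j\<in>J. q j * (y j)^2 - 2 * m * (q j * y j) + m^2 * q j)"
    by (rule sum.cong) (auto simp: power2_eq_square algebra_simps)
  also have "\<dots> = (\<Sum>j\<in>J. q j * (y j)^2) - 2 * m * m + m^2"
    using assms by (simp add: sum.distrib sum_subtractf sum_distrib_left[symmetric] m_def)
  finally show ?thesis unfolding m_def[symmetric] by (simp add: power2_eq_square)
qed

lemma key_identity: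
  fixes Q :: "real^'n^'n"
  assumes "doubly_stochastic Q"
  shows "fq Q y + (\<Sum>i\<in>UNIV. \<Sum>j\<in>UNIV. Q$i$j * (y$j - (\<Sum>k\<in>UNIV. Q$i$k * y$k))^2) = (\<Sum>j\<in>UNIV. (y$j)^2)"
proof -
  have r: "\<And>i. (\<Sum>j\<in>UNIV. Q$i$j) = 1" and c: "\<And>j. (\<Sum>i\<in>UNIV. Q$i$j) = 1"
    using assms by (auto simp: doubly_stochastic_def stochastic_def)
  have "fq Q y + (\<Sum>i\<in>UNIV. \<Sum>j\<in>UNIV. Q$i$j * (y$j - (\<Sum>k\<in>UNIV. Q$i$k * y$k))^2)
     = (\<Sum>i\<in>UNIV. \<Sum>j\<in>UNIV. Q$i$j * (y$j)^2)"
    unfolding fq_def sum.distrib[symmetric]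
    by (rule sum.cong[OF refl], rule row_identity) (auto simp: r)
  also have "\<dots> = (\<Sum>j\<in>UNIV. \<Sum>i\<in>UNIV. Q$i$j * (y$j)^2)" by (rule sum.swap)
  also have "\<dots> = (\<Sum>j\<in>UNIV. (y$j)^2)" by (simp add: sum_distrib_right[symmetric] c)
  finally show ?thesis .
qed

lemma fq_le:
  fixes Q :: "real^'n^'n"
  assumes "doubly_stochastic Q"
  shows "fq Q y \<le> (\<Sum>j\<in>UNIV. (y$j)^2)"
proof -
  have "\<And>i j. Q$i$j \<ge> 0" using assms by (auto simp: doubly_stochastic_def stochastic_def)
  hence "0 \<le> (\<Sum>i\<in>UNIV. \<Sum>j\<in>UNIV. Q$i$j * (y$j - (\<Sum>k\<in>UNIV. Q$i$k * y$k))^2)"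
    by (intro sum_nonneg mult_nonneg_nonneg) auto
  with key_identity[OF assms, of y] show ?thesis by linarith
qed

lemma fq_strict:
  fixes Q :: "real^'n^'n"
  assumes ds: "doubly_stochastic Q" and sy: "sarymsakov Q"
    and s0: "(\<Sum>j\<in>UNIV. y$j) = 0" and y0: "y \<noteq> 0"
  shows "fq Q y < (\<Sum>j\<in>UNIV. (y$j)^2)"
proof (rule ccontr)
  assume "\<not> ?thesis"
  with fq_le[OF ds, of y] have eq: "fq Q y = (\<Sum>j\<in>UNIV. (y$j)^2)" by linarith
  define m where "m i = (\<Sum>k\<in>UNIV. Q$i$k * y$k)" for i
  have nn: "\<And>i j. Q$i$j \<ge> 0" using ds by (auto simp: doubly_stochastic_def stochastic_def)
  have r: "\<And>i. (\<Sum>j\<in>UNIV. Q$i$j) = 1" and c: "\<And>j. (\<Sum>i\<in>UNIV. Q$i$j) = 1"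
    using ds by (auto simp: doubly_stochastic_def stochastic_def)
  have "(\<Sum>i\<in>UNIV. \<Sum>j\<in>UNIV. Q$i$j * (y$j - m i)^2) = 0"
    using key_identity[OF ds, of y] eq unfolding m_def by linarith
  hence "\<forall>i\<in>UNIV. (\<Sum>j\<in>UNIV. Q$i$j * (y$j - m i)^2) = 0"
    by (subst (asm) sum_nonneg_eq_0_iff) (auto intro!: sum_nonneg mult_nonneg_nonneg nn)
  hence "\<forall>i\<in>UNIV. \<forall>j\<in>UNIV. Q$i$j * (y$j - m i)^2 = 0"
    by (subst (asm) sum_nonneg_eq_0_iff) (auto intro!: mult_nonneg_nonneg nn)
  hence pos: "\<And>i j. Q$i$j > 0 \<Longrightarrow> y$j = m i"
  proof -
    fix i j assume q: "Q$i$j > 0" and h: "\<forall>i\<in>UNIV. \<forall>j\<in>UNIV. Q$i$j * (y$j - m i)^2 = 0"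
    hence "Q$i$j * (y$j - m i)^2 = 0" by blast
    hence "Q$i$j = 0 \<or> y$j = m i" by simp
    thus "y$j = m i" using q by simp
  qed
  have zero: "\<And>i j. y$j \<noteq> m i \<Longrightarrow> Q$i$j = 0" using pos nn by (metis order.not_eq_order_implies_strict)
  obtain j0 j1 where j01: "y$j0 \<noteq> y$j1"
  proof -
    { assume all: "\<forall>j0 j1. y$j0 = y$j1"
      fix a assume "a = y $ (undefined::'n)"
      hence ya: "\<And>j. y$j = a" using all by auto
      hence "real CARD('n) * a = 0" using s0 by simp
      hence "a = 0" by simp
      hence "y = 0" using ya by (simp add: vec_eq_iff)
      with y0 have False by simp }
    thus ?thesis using that by blast
  qed
  define a where "a = y$j0"
  define C where "C = {j. y$j = a}"
  define R where "R = {i. m i = a}"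
  have FR: "F_of Q R \<subseteq> C" using pos by (auto simp: F_of_def C_def R_def)
  have FR2: "F_of Q (-R) \<subseteq> -C" using pos by (auto simp: F_of_def C_def R_def)
  have "(\<Sum>i\<in>R. \<Sum>j\<in>UNIV. Q$i$j) = (\<Sum>i\<in>R. \<Sum>j\<in>C. Q$i$j)"
    by (rule sum.cong[OF refl], rule sum.mono_neutral_right) (auto simp: C_def R_def intro!: zero)
  also have "\<dots> = (\<Sum>j\<in>C. \<Sum>i\<in>R. Q$i$j)" by (rule sum.swap)
  also have "\<dots> = (\<Sum>j\<in>C. \<Sum>i\<in>UNIV. Q$i$j)"
    by (rule sum.cong[OF refl], rule sum.mono_neutral_left) (auto simp: C_def R_def intro!: zero)
  finally have "real (card R) = real (card C)" by (simp add: r c)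
  hence cRC: "card R = card C" by simp
  have "j0 \<in> C" "j1 \<notin> C" using j01 by (auto simp: C_def a_def)
  hence "C \<noteq> {}" "C \<noteq> UNIV" by auto
  have c1: "card C > 0" using \<open>C \<noteq> {}\<close> by (simp add: card_gt_0_iff)
  have c2: "card C < card (UNIV::'n set)" using \<open>C \<noteq> UNIV\<close>
    by (intro psubset_card_mono) auto
  have R1: "R \<noteq> {}" using c1 cRC by (metis card.empty less_irrefl)
  have R2: "-R \<noteq> {}" proof
    assume "-R = {}" hence "R = UNIV" by blast
    thus False using c2 cRC by simp
  qed
  have A: "R \<noteq> {} \<and> -R \<noteq> {} \<and> R \<inter> -R = {}" using R1 R2 by simp
  have "F_of Q R \<inter> F_of Q (-R) \<noteq> {} \<or> card (F_of Q R \<union> F_of Q (-R)) > card (R \<union> -R)"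
    using sy A unfolding sarymsakov_def by (elim conjE allE impE) blast+
  moreover have "F_of Q R \<inter> F_of Q (-R) = {}" using FR FR2 by blast
  moreover have "card (F_of Q R \<union> F_of Q (-R)) \<le> card (R \<union> -R)"
    by (simp add: card_mono)
  ultimately show False by linarith
qed

lemma nsq: "(norm (y::real^'n))^2 = (\<Sum>j\<in>UNIV. (y$j)^2)"
  unfolding power2_norm_eq_inner inner_vec_def by (simp add: power2_eq_square)

lemma fq_scale: "fq Q (c *\<^sub>R y) = c^2 * fq Q y"
  unfolding fq_def by (simp add: sum_distrib_left[symmetric] power_mult_distrib algebra_simps)

lemma fq_cont: "continuous_on X (\<lambda>p. fq (fst p) (snd p))"
  unfolding fq_def by (intro continuous_intros)

lemma uniform_contraction:
  fixes K :: "(real^'n^'n) set"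
  assumes cK: "compact K" and KD: "\<forall>Q\<in>K. doubly_stochastic Q \<and> sarymsakov Q"
  shows "\<exists>l. 0 \<le> l \<and> l < 1 \<and> (\<forall>Q\<in>K. \<forall>y. (\<Sum>j\<in>UNIV. y$j) = 0 \<longrightarrow> fq Q y \<le> l * (\<Sum>j\<in>UNIV. (y$j)^2))"
proof -
  define S where "S = {y::real^'n. (\<Sum>j\<in>UNIV. y$j) = 0 \<and> norm y = 1}"
  have "closed S" unfolding S_def
    by (intro closed_Collect_conj closed_Collect_eq continuous_intros)
  moreover have "bounded S" unfolding S_def bounded_iff by auto
  ultimately have cS: "compact S" by (simp add: compact_eq_bounded_closed)
  define KS where "KS = K \<times> S"
  have cKS: "compact KS" unfolding KS_def using cK cS by (rule compact_Times)
  have red: "fq Q y \<le> (norm y)^2 * fq Q' y'" if "Q \<in> K" "(\<Sum>j\<in>UNIV. y$j) = 0" "y \<noteq> 0"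
    "\<And>z. z \<in> S \<Longrightarrow> fq Q z \<le> fq Q' y'" for Q Q' y'  and y :: "real^'n"
  proof -
    define z where "z = (1 / norm y) *\<^sub>R y"
    have "z \<in> S" using that(2,3) unfolding S_def z_def
      by (simp add: sum_divide_distrib[symmetric])
    hence "fq Q z \<le> fq Q' y'" by (rule that(4))
    moreover have "fq Q y = (norm y)^2 * fq Q z" using that(3)
      by (simp add: z_def fq_scale power_divide)
    moreover have "(norm y)^2 \<ge> 0" by simp
    ultimately show ?thesis by (simp add: mult_left_mono)
  qed
  show ?thesis
  proof (cases "KS = {}")
    case True
    show ?thesis
    proof (intro exI[of _ 0] conjI ballI allI impI)
      fix Q y assume Q: "Q \<in> K" and s: "(\<Sum>j\<in>UNIV. (y::real^'n)$j) = 0"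
      show "fq Q y \<le> 0 * (\<Sum>j\<in>UNIV. (y$j)^2)"
      proof (cases "y = 0")
        case True thus ?thesis by (simp add: fq_def)
      next
        case False
        have "(1 / norm y) *\<^sub>R y \<in> S" using s False unfolding S_def
          by (simp add: sum_divide_distrib[symmetric])
        with Q True show ?thesis unfolding KS_def by blast
      qed
    qed auto
  next
    case False
    obtain p where p: "p \<in> KS" and pmax: "\<forall>t\<in>KS. fq (fst t) (snd t) \<le> fq (fst p) (snd p)"
      using continuous_attains_sup[OF cKS False fq_cont] by blast
    define g where "g = fq (fst p) (snd p)"
    have "fst p \<in> K" "snd p \<in> S" using p unfolding KS_def by auto
    hence "g < (\<Sum>j\<in>UNIV. (snd p $ j)^2)" unfolding g_def
      using KD by (intro fq_strict) (auto simp: S_def)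
    also have "\<dots> = 1" using \<open>snd p \<in> S\<close> unfolding nsq[symmetric] S_def by simp
    finally have g1: "g < 1" .
    show ?thesis
    proof (intro exI[of _ "max 0 g"] conjI ballI allI impI)
      fix Q y assume Q: "Q \<in> K" and s: "(\<Sum>j\<in>UNIV. (y::real^'n)$j) = 0"
      show "fq Q y \<le> max 0 g * (\<Sum>j\<in>UNIV. (y$j)^2)"
      proof (cases "y = 0")
        case True thus ?thesis by (simp add: fq_def)
      next
        case False
        have "fq Q y \<le> (norm y)^2 * g" unfolding g_def
          by (rule red[OF Q s False]) (use pmax Q in \<open>auto simp: KS_def\<close>)
        also have "\<dots> \<le> (norm y)^2 * max 0 g" by (intro mult_left_mono) auto
        finally show ?thesis by (simp add: nsq mult.commute)
      qed
    qed (use g1 in auto)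
  qed
qed

definition Wm :: "real^'n^'n \<Rightarrow> real" where
  "Wm M = (\<Sum>i\<in>UNIV. \<Sum>l\<in>UNIV. (M$i$l - 1 / real CARD('n))^2)"

definition cm :: "real^'n^'n \<Rightarrow> 'n \<Rightarrow> real^'n" where
  "cm M l = (\<chi> j. M$j$l - 1 / real CARD('n))"

lemma Wm_cols: "Wm M = (\<Sum>l\<in>UNIV. \<Sum>j\<in>UNIV. (cm M l $ j)^2)"
  unfolding Wm_def cm_def vec_lambda_beta by (rule sum.swap)

lemma Wm_step:
  fixes Q M :: "real^'n^'n"
  assumes r: "\<And>i. (\<Sum>j\<in>UNIV. Q$i$j) = 1"
  shows "Wm (Q ** M) = (\<Sum>l\<in>UNIV. fq Q (cm M l))"
proof -
  have e: "(Q ** M)$i$l - 1 / real CARD('n) = (\<Sum>j\<in>UNIV. Q$i$j * (cm M l $ j))" for i l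
  proof -
    have "(\<Sum>j\<in>UNIV. Q$i$j * (cm M l $ j)) = (\<Sum>j\<in>UNIV. Q$i$j * M$j$l) - (\<Sum>j\<in>UNIV. Q$i$j) / real CARD('n)"
      by (simp add: cm_def algebra_simps sum_subtractf sum_divide_distrib)
    thus ?thesis by (simp add: r matrix_matrix_mult_def)
  qed
  show ?thesis unfolding Wm_def fq_def e by (rule sum.swap)
qed

lemma cm_sum:
  fixes M :: "real^'n^'n"
  assumes "(\<Sum>i\<in>UNIV. M$i$l) = 1"
  shows "(\<Sum>j\<in>UNIV. cm M l $ j) = 0"
  using assms by (simp add: cm_def sum_subtractf)

lemma colsum_mult:
  fixes Q M :: "real^'n^'n"
  assumes c: "\<And>j. (\<Sum>i\<in>UNIV. Q$i$j) = 1" and m: "(\<Sum>i\<in>UNIV. M$i$l) = 1"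
  shows "(\<Sum>i\<in>UNIV. (Q ** M)$i$l) = 1"
proof -
  have "(\<Sum>i\<in>UNIV. (Q ** M)$i$l) = (\<Sum>i\<in>UNIV. \<Sum>k\<in>UNIV. Q$i$k * M$k$l)"
    by (simp add: matrix_matrix_mult_def)
  also have "\<dots> = (\<Sum>k\<in>UNIV. \<Sum>i\<in>UNIV. Q$i$k * M$k$l)" by (rule sum.swap)
  also have "\<dots> = (\<Sum>k\<in>UNIV. M$k$l)" by (simp add: sum_distrib_right[symmetric] c)
  finally show ?thesis using m by simp
qed

lemma norm_Wm: "(norm (M - (\<chi> i l. 1 / real CARD('n)) :: real^'n^'n))^2 = Wm M"
  unfolding power2_norm_eq_inner inner_vec_def Wm_def by (simp add: power2_eq_square)

lemma mat1_colsum: "(\<Sum>i\<in>UNIV. (mat 1 :: real^'n^'n)$i$l) = 1"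
  by (simp add: mat_def)

theorem corollary2:
  fixes \<P> :: "(real^'n^'n) set" and P :: "nat \<Rightarrow> real^'n^'n"
    and j :: "nat \<Rightarrow> nat" and T :: nat
  assumes "compact \<P>"
    and "\<forall>Q\<in>\<P>. doubly_stochastic Q"
    and "\<forall>k\<ge>1. P k \<in> \<P>"
    and "strict_mono j" and "j 0 \<ge> 1"
    and "\<forall>r. sarymsakov (P (j r))"
    and "compact (\<Union>r. {P (j r)})"
    and "\<forall>r. j (Suc r) - j r \<le> T"
  shows "\<exists>c :: real^'n. (\<forall>i. c $ i \<ge> 0) \<and> (\<Sum>i\<in>UNIV. c $ i) = 1 \<and>
           (\<lambda>k. left_prod P k) \<longlonglongrightarrow> (\<chi> i l. c $ l)"
proof -
  note A = assms
  have ds: "doubly_stochastic (P k)" if "k \<ge> 1" for k using A(2,3) that by blast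
  have dsS: "doubly_stochastic (P (Suc k))" for k using ds by simp
  have rS: "\<And>i. (\<Sum>j\<in>UNIV. P (Suc k)$i$j) = 1" and cS: "\<And>j. (\<Sum>i\<in>UNIV. P (Suc k)$i$j) = 1" for k
    using dsS[of k] by (auto simp: doubly_stochastic_def stochastic_def)
  have jge: "j r \<ge> 1" for r using A(4,5) strict_mono_less_eq[OF A(4), of 0 r] by simp
  define K where "K = (\<Union>r. {P (j r)})"
  have KD: "\<forall>Q\<in>K. doubly_stochastic Q \<and> sarymsakov Q"
    unfolding K_def using ds jge A(6) by auto
  obtain lam where lam0: "0 \<le> lam" and lam1: "lam < 1"
    and lamK: "\<forall>Q\<in>K. \<forall>y. (\<Sum>j\<in>UNIV. y$j) = 0 \<longrightarrow> fq Q y \<le> lam * (\<Sum>j\<in>UNIV. (y$j)^2)"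
    using uniform_contraction[OF A(7)[folded K_def] KD] by blast
  define M where "M k = left_prod P k" for k
  define W where "W k = Wm (M k)" for k
  have colM: "(\<Sum>i\<in>UNIV. M k $i$l) = 1" for k l
  proof (induction k)
    case 0 thus ?case by (simp add: M_def mat1_colsum)
  next
    case (Suc k) thus ?case unfolding M_def by (simp add: colsum_mult cS)
  qed
  have WS: "W (Suc k) = (\<Sum>l\<in>UNIV. fq (P (Suc k)) (cm (M k) l))" for k
    unfolding W_def M_def by (simp add: Wm_step rS)
  have W0: "W k \<ge> 0" for k unfolding W_def Wm_def by (intro sum_nonneg) auto
  have dec1: "W (Suc k) \<le> W k" for k
  proof -
    have "W (Suc k) \<le> (\<Sum>l\<in>UNIV. \<Sum>q\<in>UNIV. (cm (M k) l $ q)^2)"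
      unfolding WS by (intro sum_mono fq_le dsS)
    thus ?thesis by (simp add: W_def Wm_cols)
  qed
  have decs: "decseq W" by (rule decseq_SucI) (use dec1 in auto)
  have contr: "W (j r) \<le> lam * W (j r - 1)" for r
  proof -
    have jr: "j r = Suc (j r - 1)" using jge[of r] by simp
    have PK: "P (Suc (j r - 1)) \<in> K" unfolding K_def using jr by (metis UN_iff singletonI UNIV_I)
    have "W (Suc (j r - 1)) \<le> (\<Sum>l\<in>UNIV. lam * (\<Sum>q\<in>UNIV. (cm (M (j r - 1)) l $ q)^2))"
      unfolding WS using lamK PK cm_sum[OF colM] by (intro sum_mono) blast
    also have "\<dots> = lam * W (j r - 1)" by (simp add: W_def Wm_cols sum_distrib_left)
    finally show ?thesis using jr by simp
  qed
  have geo: "W (j r) \<le> lam^(Suc r) * W 0" for r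
  proof (induction r)
    case 0
    have "W (j 0) \<le> lam * W (j 0 - 1)" by (rule contr)
    also have "\<dots> \<le> lam * W 0" using decs lam0 by (intro mult_left_mono) (auto simp: decseq_def)
    finally show ?case by simp
  next
    case (Suc r)
    have "j (Suc r) - 1 \<ge> j r" proof -
      have "j r < j (Suc r)" using A(4) by (simp add: strict_mono_def)
      thus ?thesis by simp
    qed
    have "W (j (Suc r)) \<le> lam * W (j (Suc r) - 1)" by (rule contr)
    also have "\<dots> \<le> lam * W (j r)" using decs lam0 \<open>j (Suc r) - 1 \<ge> j r\<close>
      by (intro mult_left_mono) (auto simp: decseq_def)
    also have "\<dots> \<le> lam * (lam^(Suc r) * W 0)" using Suc lam0 by (intro mult_left_mono) auto
    finally show ?case by simp
  qed
  have lim0: "(\<lambda>r. lam^(Suc r) * W 0) \<longlonglongrightarrow> 0"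
  proof -
    have "(\<lambda>r. lam^r) \<longlonglongrightarrow> 0" using lam0 lam1 by (intro LIMSEQ_power_zero) simp
    hence "(\<lambda>r. lam^(Suc r)) \<longlonglongrightarrow> 0" by (rule LIMSEQ_Suc)
    thus ?thesis by (simp add: tendsto_mult_left_zero)
  qed
  have Wlim: "W \<longlonglongrightarrow> 0"
  proof (rule LIMSEQ_I)
    fix e :: real assume e: "e > 0"
    obtain r where r: "\<forall>n\<ge>r. norm (lam^(Suc n) * W 0 - 0) < e" using LIMSEQ_D[OF lim0 e] by blast
    show "\<exists>N. \<forall>k\<ge>N. norm (W k - 0) < e"
    proof (intro exI allI impI)
      fix k assume "k \<ge> j r"
      hence "W k \<le> W (j r)" using decs by (simp add: decseq_def)
      also have "\<dots> \<le> lam^(Suc r) * W 0" by (rule geo)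
      also have "\<dots> < e" using r by auto
      finally show "norm (W k - 0) < e" using W0[of k] by simp
    qed
  qed
  define c :: "real^'n" where "c = (\<chi> l. 1 / real CARD('n))"
  have E: "(\<chi> i l. c $ l) = (\<chi> i l. 1 / real CARD('n) :: real^'n^'n)" by (simp add: c_def)
  have nW: "norm (M k - (\<chi> i l. c $ l)) = sqrt (W k)" for k
    unfolding E W_def using norm_Wm[of "M k"] by (metis norm_ge_zero real_sqrt_unique)
  have "(\<lambda>k. sqrt (W k)) \<longlonglongrightarrow> sqrt 0" by (intro tendsto_real_sqrt Wlim)
  hence "(\<lambda>k. norm (M k - (\<chi> i l. c $ l))) \<longlonglongrightarrow> 0" unfolding nW by simp
  hence conv: "M \<longlonglongrightarrow> (\<chi> i l. c $ l)" by (simp add: tendsto_norm_zero_iff Lim_null[symmetric])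
  show ?thesis
  proof (intro exI[of _ c] conjI allI)
    show "\<And>i. c $ i \<ge> 0" by (simp add: c_def)
    show "(\<Sum>i\<in>UNIV. c $ i) = 1" by (simp add: c_def)
    show "(\<lambda>k. left_prod P k) \<longlonglongrightarrow> (\<chi> i l. c $ l)" using conv by (simp add: M_def[abs_def])
  qed
qed

end
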